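(* Let $\tilde\ell:\mathcal{W}\times\mathcal{Z}\to\mathbb{R}$ be any measurable (auxiliary) loss function and let \[ v_n=\mathbb{E}_{S'\sim(\mu')^{\otimes n}}\Big[\inf_{w\in\mathcal{W}}\frac1n\sum_{i=1}^n\tilde\ell(w,Z'_i)\Big]. \] Define for $r\ge0$ \[ \mathsf{D}_1(r)=\sup_{P_{W'|S'}:\ I(W';S')\le r}\mathbb{E}\big[L_\mu(W')-L_{S'}(W')\big],\qquad \tilde{\mathsf{D}}_2(r)=\sup_{\substack{P_{\hat W|\tilde Z}:\ I(\hat W;\tilde Z)\le r,\\ \mathbb{E}[\tilde\ell(\hat W,\tilde Z)]\ge v_n}}\mathbb{E}\big[L_\mu(\hat W)-\ell(\hat W,\tilde Z)\big], \] where in $\mathsf{D}_1$ the supremum is over Markov kernels from $\mathcal{Z}^n$ to $\mathcal{W}$ with $S'=(Z'_1,\dots,Z'_n)\sim(\mu')^{\otimes n}$, and in $\tilde{\mathsf{D}}_2$ over Markov kernels from $\mathcal{Z}$ to $\mathcal{W}$ with $\tilde Z\sim\mu'$. Then for all $r\ge0$, \[ \mathsf{D}_1(r)\le\tilde{\mathsf{D}}_2(r/n)\le\mathsf{D}_2(r/n), \] where $\mathsf{D}_2(r)=\sup_{P_{\hat W|Z'}:\ I(\hat W;Z')\le r}\mathbb{E}[L_\mu(\hat W)-\ell(\hat W,Z')]$ with $Z'\sim\mu'$.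
   Context: $\mathcal{Z},\mathcal{W}$ measurable spaces, $\ell:\mathcal{W}\times\mathcal{Z}\to[0,\infty)$ measurable loss, $\mu$ (test) and $\mu'$ (training) distributions on $\mathcal{Z}$, $L_\mu(w)=\mathbb{E}_{Z\sim\mu}\ell(w,Z)$, $L_s(w)=\frac1n\sum_{i=1}^n\ell(w,z_i)$. All expectations (including $v_n$) are assumed well defined and finite. $I(\cdot;\cdot)$ denotes mutual information. *)

theory Defs
  imports "HOL-Probability.Probability"
begin

text \<open>If P is absolutely continuous w.r.t. Q with density f = dP/dQ, then
  D(P||Q) = integral of f ln f dQ, which (P, Q probability measures) equals the
  nonnegative integral of (f ln f - f + 1) dQ; otherwise D(P||Q) = infinity.\<close>
definition KL_div :: "'a measure \<Rightarrow> 'a measure \<Rightarrow> ennreal" where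
  "KL_div P Q =
     (if sets P = sets Q \<and> absolutely_continuous Q P
      then (\<integral>\<^sup>+ x. ennreal (let f = enn2real (RN_deriv Q P x) in f * ln f - f + 1) \<partial>Q)
      else \<infinity>)"

definition mutual_info :: "'a measure \<Rightarrow> 'b measure \<Rightarrow> ('a \<times> 'b) measure \<Rightarrow> ennreal" where
  "mutual_info A B J = KL_div J (distr J A fst \<Otimes>\<^sub>M distr J B snd)"

definition joint_law :: "'a measure \<Rightarrow> ('a \<Rightarrow> 'b measure) \<Rightarrow> 'b measure \<Rightarrow> ('a \<times> 'b) measure" where
  "joint_law M K MW = M \<bind> (\<lambda>x. distr (K x) (M \<Otimes>\<^sub>M MW) (\<lambda>w. (x, w)))"

definition pop_risk :: "'z measure \<Rightarrow> ('w \<Rightarrow> 'z \<Rightarrow> real) \<Rightarrow> 'w \<Rightarrow> real" where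
  "pop_risk \<mu> loss w = (\<integral>z. loss w z \<partial>\<mu>)"

definition emp_risk :: "nat \<Rightarrow> ('w \<Rightarrow> 'z \<Rightarrow> real) \<Rightarrow> 'w \<Rightarrow> (nat \<Rightarrow> 'z) \<Rightarrow> real" where
  "emp_risk n loss w s = (\<Sum>i<n. loss w (s i)) / real n"

end

theory Submission
  imports Defs
begin


lemma KL_setup:
  assumes P: "prob_space P" and Q: "prob_space Q" and s: "sets P = sets Q"
    and ac: "absolutely_continuous Q P"
  shows "P = density Q (\<lambda>x. ennreal (enn2real (RN_deriv Q P x)))"
proof -
  interpret Q: prob_space Q by fact
  interpret P: prob_space P by fact
  have d: "density Q (RN_deriv Q P) = P" by (rule Q.density_RN_deriv) (use ac s in auto)
  have "AE x in Q. RN_deriv Q P x \<noteq> \<infinity>"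
    by (rule Q.RN_deriv_finite) (use ac s P.sigma_finite_measure_axioms in auto)
  then have "AE x in Q. RN_deriv Q P x = ennreal (enn2real (RN_deriv Q P x))"
  proof eventually_elim
    case (elim x) then show ?case by (simp add: less_top ennreal_enn2real)
  qed
  then have "density Q (RN_deriv Q P) = density Q (\<lambda>x. ennreal (enn2real (RN_deriv Q P x)))"
    by (intro density_cong) auto
  then show ?thesis using d by simp
qed

lemma KL_density_facts:
  assumes P: "prob_space P" and Q: "prob_space Q" and s: "sets P = sets Q"
    and ac: "absolutely_continuous Q P"
  defines "f \<equiv> \<lambda>x. enn2real (RN_deriv Q P x)"
  shows "f \<in> borel_measurable Q" "\<And>x. f x \<ge> 0" "integrable Q f" "(\<integral>x. f x \<partial>Q) = 1"
    "\<And>g::_\<Rightarrow>real. integrable P g \<Longrightarrow> (\<integral>x. g x \<partial>P) = (\<integral>x. f x * g x \<partial>Q)"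
    "\<And>g::_\<Rightarrow>real. g \<in> borel_measurable Q \<Longrightarrow> integrable P g \<longleftrightarrow> integrable Q (\<lambda>x. f x * g x)"
    "\<And>g::_\<Rightarrow>ennreal. g \<in> borel_measurable Q \<Longrightarrow> (\<integral>\<^sup>+x. g x \<partial>P) = (\<integral>\<^sup>+x. ennreal (f x) * g x \<partial>Q)"
proof -
  interpret Q: prob_space Q by fact
  interpret P: prob_space P by fact
  have Pd: "P = density Q (\<lambda>x. ennreal (f x))" unfolding f_def by (rule KL_setup[OF assms(1-4)])
  show fm: "f \<in> borel_measurable Q" unfolding f_def by simp
  show f0: "\<And>x. f x \<ge> 0" unfolding f_def by simp
  show ng: "\<And>g::_\<Rightarrow>ennreal. g \<in> borel_measurable Q \<Longrightarrow> (\<integral>\<^sup>+x. g x \<partial>P) = (\<integral>\<^sup>+x. ennreal (f x) * g x \<partial>Q)"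
  proof -
    fix g :: "_ \<Rightarrow> ennreal" assume "g \<in> borel_measurable Q"
    then show "(\<integral>\<^sup>+x. g x \<partial>P) = (\<integral>\<^sup>+x. ennreal (f x) * g x \<partial>Q)"
      using nn_integral_density[of "\<lambda>x. ennreal (f x)" Q g] fm Pd by simp
  qed
  have "(\<integral>\<^sup>+x. ennreal (f x) \<partial>Q) = 1"
    using ng[of "\<lambda>_. 1"] P.emeasure_space_1 by simp
  then show "integrable Q f" "(\<integral>x. f x \<partial>Q) = 1"
    using f0 fm
    by (auto intro!: integrableI_nonneg simp: integral_eq_nn_integral)
  show "\<And>g::_\<Rightarrow>real. integrable P g \<Longrightarrow> (\<integral>x. g x \<partial>P) = (\<integral>x. f x * g x \<partial>Q)"
  proof -
    fix g :: "_\<Rightarrow>real" assume "integrable P g"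
    then have gm: "g \<in> borel_measurable Q" using borel_measurable_integrable[OF \<open>integrable P g\<close>] measurable_cong_sets[OF s refl] by metis
    show "(\<integral>x. g x \<partial>P) = (\<integral>x. f x * g x \<partial>Q)"
      using integral_density[of g Q f] gm fm f0 Pd by simp
  qed
  show "\<And>g::_\<Rightarrow>real. g \<in> borel_measurable Q \<Longrightarrow> integrable P g \<longleftrightarrow> integrable Q (\<lambda>x. f x * g x)"
  proof -
    fix g :: "_\<Rightarrow>real" assume "g \<in> borel_measurable Q"
    then show "integrable P g \<longleftrightarrow> integrable Q (\<lambda>x. f x * g x)"
      using integrable_density[of g Q f] fm f0 Pd by simp
  qed
qed



lemma young_ln: fixes a t :: real assumes "a \<ge> 0"
  shows "a * t \<le> a * ln a - a + exp t"
proof (cases "a = 0")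
  case True then show ?thesis by simp
next
  case False
  then have a: "a > 0" using assms by simp
  have "exp t = a * exp (t - ln a)" using a by (simp add: exp_diff)
  moreover have "1 + (t - ln a) \<le> exp (t - ln a)" by (rule exp_ge_add_one_self)
  ultimately have "a * (1 + (t - ln a)) \<le> exp t" using a by (metis mult_left_mono less_imp_le)
  then show ?thesis by (simp add: algebra_simps)
qed

lemma phi_nonneg: fixes a :: real assumes "a \<ge> 0" shows "a * ln a - a + 1 \<ge> 0"
  using young_ln[OF assms, of 0] by simp

lemma int_mult_bdd:
  fixes f g :: "_ \<Rightarrow> real" and B :: real
  assumes "integrable M f" "g \<in> borel_measurable M" "\<And>x. \<bar>g x\<bar> \<le> B"
  shows "integrable M (\<lambda>x. f x * g x)"
proof (rule Bochner_Integration.integrable_bound[where f="\<lambda>x. B * f x"])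
  show "integrable M (\<lambda>x. B * f x)" using assms(1) by simp
  show "(\<lambda>x. f x * g x) \<in> borel_measurable M" using assms(1,2) by measurable
  show "AE x in M. norm (f x * g x) \<le> norm (B * f x)"
  proof (intro AE_I2)
    fix x
    have "\<bar>f x * g x\<bar> = \<bar>f x\<bar> * \<bar>g x\<bar>" by (simp add: abs_mult)
    also have "\<dots> \<le> \<bar>f x\<bar> * \<bar>B\<bar>" using assms(3)[of x] by (intro mult_left_mono) auto
    finally show "norm (f x * g x) \<le> norm (B * f x)" by (simp add: abs_mult mult.commute)
  qed
qed

lemma DV_lower:
  assumes P: "prob_space P" and Q: "prob_space Q" and s: "sets P = sets Q"
    and gm: "g \<in> borel_measurable Q" and gb: "\<And>x. \<bar>g x\<bar> \<le> B"
    and fin: "KL_div P Q \<noteq> \<infinity>"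
  shows "(\<integral>x. g x \<partial>P) - ln (\<integral>x. exp (g x) \<partial>Q) \<le> enn2real (KL_div P Q)"
proof -
  interpret Q: prob_space Q by fact
  interpret P: prob_space P by fact
  have ac: "absolutely_continuous Q P" using fin unfolding KL_div_def by (auto split: if_splits)
  define f where "f x = enn2real (RN_deriv Q P x)" for x
  note F = KL_density_facts[OF P Q s ac, folded f_def]
  define \<phi> where "\<phi> = (\<lambda>x. f x * ln (f x) - f x + 1)"
  have \<phi>m: "\<phi> \<in> borel_measurable Q" unfolding \<phi>_def using F(1) by measurable
  have \<phi>0: "\<And>x. \<phi> x \<ge> 0" unfolding \<phi>_def using F(2) by (intro phi_nonneg)
  have KLe: "KL_div P Q = (\<integral>\<^sup>+x. ennreal (\<phi> x) \<partial>Q)"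
    using ac s unfolding KL_div_def \<phi>_def f_def by (simp add: Let_def)
  have \<phi>i: "integrable Q \<phi>"
    using KLe fin \<phi>m \<phi>0 by (intro integrableI_nonneg) (auto simp: less_top)
  have KLr: "enn2real (KL_div P Q) = (\<integral>x. \<phi> x \<partial>Q)"
    using KLe \<phi>i \<phi>0 by (simp add: nn_integral_eq_integral)
  have gb2: "-B \<le> g x" "g x \<le> B" for x using gb[of x] by linarith+
  define m where "m = (\<integral>x. exp (g x) \<partial>Q)"
  have ei: "integrable Q (\<lambda>x. exp (g x))"
  proof (rule Q.integrable_const_bound[where B="exp B"])
    show "AE x in Q. norm (exp (g x)) \<le> exp B"
      using gb by (intro AE_I2) (simp add: abs_le_iff)
  qed (use gm in measurable)
  have "(\<integral>x. exp (- B) \<partial>Q) \<le> m" unfolding m_def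
    using gb2 ei by (intro integral_mono) auto
  then have "exp (-B) \<le> m" by (simp add: Q.prob_space)
  then have mpos: "m > 0" using exp_gt_zero[of "-B"] by linarith
  have gi: "integrable Q g" by (rule Q.integrable_const_bound[where B=B]) (auto intro!: AE_I2 simp: gb gm)
  have fgi: "integrable Q (\<lambda>x. f x * g x)"
    by (rule int_mult_bdd[OF F(3) gm gb])
  have gP: "(\<integral>x. g x \<partial>P) = (\<integral>x. f x * g x \<partial>Q)"
    by (rule F(5)) (use F(6)[OF gm] fgi in simp)
  have pt: "\<And>x. f x * (g x - ln m) \<le> \<phi> x - 1 + exp (g x) / m"
  proof -
    fix x
    have "f x * (g x - ln m) \<le> f x * ln (f x) - f x + exp (g x - ln m)"
      by (rule young_ln) (use F(2) in simp)
    also have "exp (g x - ln m) = exp (g x) / m" using mpos by (simp add: exp_diff)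
    finally show "f x * (g x - ln m) \<le> \<phi> x - 1 + exp (g x) / m" unfolding \<phi>_def by simp
  qed
  have "(\<integral>x. f x * (g x - ln m) \<partial>Q) \<le> (\<integral>x. \<phi> x - 1 + exp (g x) / m \<partial>Q)"
    using pt fgi F(3) \<phi>i ei by (intro integral_mono) (auto simp: right_diff_distrib)
  also have "\<dots> = (\<integral>x. \<phi> x \<partial>Q) - 1 + m / m"
    using \<phi>i ei unfolding m_def by (simp add: Q.prob_space)
  also have "(\<integral>x. f x * (g x - ln m) \<partial>Q) = (\<integral>x. f x * g x \<partial>Q) - ln m * (\<integral>x. f x \<partial>Q)"
    using fgi F(3) by (simp add: right_diff_distrib mult.commute)
  finally show ?thesis using mpos F(4) gP KLr unfolding m_def by simp
qed



definition clampN :: "nat \<Rightarrow> real \<Rightarrow> real" where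
  "clampN N y = max (1 / (real N + 1)) (min ((real N + 1)) y)"

lemma inv_le_one_le: "1 / (real N + 1) \<le> 1" "1 \<le> (real N + 1)" "1 / (real N + 1) > 0"
  by (auto simp: divide_simps)

lemma clampN_bounds: "1 / (real N + 1) \<le> clampN N y" "clampN N y \<le> (real N + 1)"
proof -
  have "1 / (real N + 1) \<le> (real N + 1)" using inv_le_one_le[of N] by linarith
  then show "1 / (real N + 1) \<le> clampN N y" "clampN N y \<le> (real N + 1)"
    unfolding clampN_def by (auto simp: max_def min_def)
qed

lemma clampN_pos: "clampN N y > 0"
proof -
  have h: "0 < 1 / (real N + 1)" by (simp add: add_pos_nonneg)
  have h2: "1 / (real N + 1) \<le> clampN N y" by (rule clampN_bounds(1))
  show ?thesis by (rule order_less_le_trans[OF h h2])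
qed

lemma ln_clampN_bound: "\<bar>ln (clampN N y)\<bar> \<le> ln ((real N + 1))"
proof -
  have p: "clampN N y > 0" by (rule clampN_pos)
  have up: "ln (clampN N y) \<le> ln ((real N + 1))"
    using clampN_bounds(2)[of N y] p by simp
  have "ln (1 / (real N + 1)) \<le> ln (clampN N y)"
    using clampN_bounds(1)[of N y] p by (subst ln_le_cancel_iff) (auto intro: add_pos_nonneg)
  then have lo: "- ln ((real N + 1)) \<le> ln (clampN N y)" by (simp add: ln_div)
  show ?thesis using up lo by linarith
qed

lemma psi_nonneg: assumes "a \<ge> 0" shows "a * ln (clampN N a) - clampN N a + 1 \<ge> 0"
proof -
  define t where "t = (real N + 1)"
  have t1: "t \<ge> 1" unfolding t_def by simp
  have it: "1 / t \<le> 1" unfolding t_def by (rule inv_le_one_le)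
  have tt: "1 / t \<le> t" using it t1 by linarith
  consider "a \<le> 1 / t" | "a \<ge> t" | "1/t \<le> a" "a \<le> t" by linarith
  then show ?thesis
  proof cases
    case 1
    then have c: "clampN N a = 1 / t" unfolding clampN_def t_def[symmetric] using tt
      by (auto simp: max_def min_def)
    have l: "ln t \<ge> 0" using t1 by simp
    have "ln t \<le> t - 1" using t1 by (intro ln_le_minus_one) simp
    then have "(1 + ln t) / t \<le> 1" using t1 by (simp add: divide_simps)
    moreover have "a * ln t \<le> (1/t) * ln t" using 1 l by (intro mult_right_mono) auto
    ultimately have "a * ln t + 1 / t \<le> 1" by (simp add: add_divide_distrib)
    then show ?thesis using c t1 by (simp add: ln_div)
  next
    case 2
    then have c: "clampN N a = t" unfolding clampN_def t_def[symmetric] using tt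
      by (auto simp: max_def min_def)
    have l: "ln t \<ge> 0" using t1 by simp
    have "t * ln t - t + 1 \<ge> 0" using phi_nonneg[of t] t1 by simp
    moreover have "t * ln t \<le> a * ln t" using 2 l by (intro mult_right_mono) auto
    ultimately show ?thesis using c by simp
  next
    case 3
    then have c: "clampN N a = a" unfolding clampN_def t_def[symmetric] using tt
      by (auto simp: max_def min_def)
    show ?thesis using c phi_nonneg[OF assms] by simp
  qed
qed

lemma psi_tendsto: assumes "a \<ge> 0"
  shows "(\<lambda>N. a * ln (clampN N a) - clampN N a + 1) \<longlonglongrightarrow> a * ln a - a + 1"
proof (cases "a = 0")
  case True
  have "(\<lambda>N. 1 / (real N + 1)) \<longlonglongrightarrow> 0"
    using LIMSEQ_Suc[OF lim_1_over_n] by (simp add: add.commute)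
  then have "(\<lambda>N. 1 - 1 / (real N + 1)) \<longlonglongrightarrow> 1 - 0" by (intro tendsto_intros)
  moreover have "clampN N 0 = 1 / (real N + 1)" for N unfolding clampN_def by simp
  ultimately show ?thesis using True by simp
next
  case False
  then have a: "a > 0" using assms by simp
  obtain M :: nat where M: "real M \<ge> max a (1/a)" using real_arch_simple by blast
  have "eventually (\<lambda>N. clampN N a = a) sequentially"
  proof (rule eventually_sequentiallyI[of M])
    fix N assume "M \<le> N"
    then have "(real N + 1) \<ge> max a (1/a)" using M by linarith
    then have h1: "a \<le> (real N + 1)" and h2: "1 / a \<le> (real N + 1)" by auto
    have "1 / (real N + 1) \<le> a" using h2 a by (simp add: divide_simps mult.commute)
    then show "clampN N a = a" using h1 unfolding clampN_def by simp
  qed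
  then have "eventually (\<lambda>N. a * ln (clampN N a) - clampN N a + 1 = a * ln a - a + 1) sequentially"
    by eventually_elim simp
  then show ?thesis by (rule tendsto_eventually)
qed

lemma DV_upper:
  assumes P: "prob_space P" and Q: "prob_space Q" and s: "sets P = sets Q" and c0: "c \<ge> 0"
    and H: "\<And>g B. g \<in> borel_measurable Q \<Longrightarrow> (\<And>x. \<bar>g x\<bar> \<le> B) \<Longrightarrow>
              (\<integral>x. g x \<partial>P) - ln (\<integral>x. exp (g x) \<partial>Q) \<le> c"
  shows "KL_div P Q \<le> ennreal c"
proof (cases "absolutely_continuous Q P")
  case False
  interpret Q: prob_space Q by fact
  interpret P: prob_space P by fact
  from False obtain A where A: "A \<in> null_sets Q" "A \<notin> null_sets P"
    unfolding absolutely_continuous_def by auto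
  have As: "A \<in> sets Q" "A \<in> sets P" using A(1) s by auto
  have QA: "measure Q A = 0" using A(1) by (simp add: measure_eq_0_null_sets)
  have "emeasure P A \<noteq> 0" using A(2) As(2) by (auto simp: null_sets_def)
  then have "measure P A \<noteq> 0" using P.emeasure_eq_measure[of A] by auto
  then have PA: "measure P A > 0" using measure_nonneg[of P A] by linarith
  define t where "t = (c + 1) / measure P A"
  have t0: "t \<ge> 0" unfolding t_def using PA c0 by simp
  define g where "g = (\<lambda>x. t * indicator A x :: real)"
  have gm: "g \<in> borel_measurable Q" unfolding g_def using As by measurable
  have gb: "\<bar>g x\<bar> \<le> t" for x unfolding g_def using t0 by (simp add: indicator_def)
  have "(\<integral>x. g x \<partial>P) = t * measure P A" unfolding g_def using As by simp
  also have "\<dots> = c + 1" unfolding t_def using PA by simp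
  finally have gP: "(\<integral>x. g x \<partial>P) = c + 1" .
  have "(\<lambda>x. exp (g x)) = (\<lambda>x. 1 + (exp t - 1) * indicator A x)"
    unfolding g_def by (auto simp: indicator_def fun_eq_iff)
  moreover have i1: "integrable Q (\<lambda>x. (exp t - 1) * indicator A x :: real)"
    using As by (intro integrable_mult_right integrable_real_indicator) (auto simp: less_top[symmetric])
  moreover have "(\<integral>x. 1 + (exp t - 1) * indicator A x \<partial>Q) =
      (\<integral>x. 1 \<partial>Q) + (\<integral>x. (exp t - 1) * indicator A x \<partial>Q)"
    using i1 by (intro Bochner_Integration.integral_add) auto
  ultimately have "(\<integral>x. exp (g x) \<partial>Q) = 1 + (exp t - 1) * measure Q A"
    using As by (simp add: Q.prob_space)
  then have gQ: "(\<integral>x. exp (g x) \<partial>Q) = 1" using QA by simp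
  have "c + 1 \<le> c" using H[OF gm gb] gP gQ by simp
  then show ?thesis by simp
next
  case True
  interpret Q: prob_space Q by fact
  interpret P: prob_space P by fact
  define f where "f x = enn2real (RN_deriv Q P x)" for x
  note F = KL_density_facts[OF P Q s True, folded f_def]
  define \<psi> where "\<psi> N x = f x * ln (clampN N (f x)) - clampN N (f x) + 1" for N x
  have cm: "(\<lambda>x. clampN N (f x)) \<in> borel_measurable Q" for N
    unfolding clampN_def using F(1) by measurable
  have lcm: "(\<lambda>x. ln (clampN N (f x))) \<in> borel_measurable Q" for N
    using cm by measurable
  have \<psi>m: "\<psi> N \<in> borel_measurable Q" for N
    unfolding \<psi>_def using F(1) cm lcm by measurable
  have \<psi>0: "\<psi> N x \<ge> 0" for N x unfolding \<psi>_def by (rule psi_nonneg[OF F(2)])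
  have ci: "integrable Q (\<lambda>x. clampN N (f x))" for N
  proof (rule Q.integrable_const_bound[where B="real N + 1"])
    show "AE x in Q. norm (clampN N (f x)) \<le> real N + 1"
      using clampN_bounds(2) clampN_pos by (intro AE_I2) (simp add: less_imp_le)
  qed (use cm in simp)
  have fgi: "integrable Q (\<lambda>x. f x * ln (clampN N (f x)))" for N
    by (rule int_mult_bdd[OF F(3) lcm ln_clampN_bound])
  have \<psi>i: "integrable Q (\<psi> N)" for N
    unfolding \<psi>_def using fgi ci by simp
  have \<psi>int: "(\<integral>x. \<psi> N x \<partial>Q) \<le> c" for N
  proof -
    define m where "m = (\<integral>x. clampN N (f x) \<partial>Q)"
    have "(\<integral>x. 1 / (real N + 1) \<partial>Q) \<le> m"
      unfolding m_def using ci clampN_bounds(1) by (intro integral_mono) auto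
    then have "1 / (real N + 1) \<le> m" by (simp add: Q.prob_space)
    then have mpos: "m > 0" using order_less_le_trans[of 0 "1 / (real N + 1)" m] by (simp add: add_pos_nonneg)
    have gP: "(\<integral>x. ln (clampN N (f x)) \<partial>P) = (\<integral>x. f x * ln (clampN N (f x)) \<partial>Q)"
      by (rule F(5)) (use F(6)[OF lcm] fgi in simp)
    have e: "exp (ln (clampN N (f x))) = clampN N (f x)" for x using clampN_pos by simp
    have "(\<integral>x. ln (clampN N (f x)) \<partial>P) - ln m \<le> c"
      using H[OF lcm[of N] ln_clampN_bound[of N]] unfolding e m_def .
    then have A: "(\<integral>x. f x * ln (clampN N (f x)) \<partial>Q) \<le> c + ln m" using gP by simp
    have "ln m \<le> m - 1" using mpos by (rule ln_le_minus_one)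
    moreover have "(\<integral>x. \<psi> N x \<partial>Q) = (\<integral>x. f x * ln (clampN N (f x)) \<partial>Q) - m + 1"
      unfolding \<psi>_def m_def using fgi ci by (simp add: Q.prob_space)
    ultimately show ?thesis using A by simp
  qed
  have KLe: "KL_div P Q = (\<integral>\<^sup>+x. ennreal (f x * ln (f x) - f x + 1) \<partial>Q)"
    using True s unfolding KL_div_def f_def by (simp add: Let_def)
  have lim: "liminf (\<lambda>N. ennreal (\<psi> N x)) = ennreal (f x * ln (f x) - f x + 1)" for x
    unfolding \<psi>_def
    by (intro lim_imp_Liminf tendsto_ennrealI psi_tendsto F(2)) simp
  have "KL_div P Q = (\<integral>\<^sup>+x. liminf (\<lambda>N. ennreal (\<psi> N x)) \<partial>Q)"
    unfolding KLe lim ..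
  also have "\<dots> \<le> liminf (\<lambda>N. \<integral>\<^sup>+x. ennreal (\<psi> N x) \<partial>Q)"
    using \<psi>m by (intro nn_integral_liminf) measurable
  also have "\<dots> \<le> limsup (\<lambda>N. \<integral>\<^sup>+x. ennreal (\<psi> N x) \<partial>Q)"
    by (rule Liminf_le_Limsup) simp
  also have "\<dots> \<le> ennreal c"
  proof (rule Limsup_bounded, intro always_eventually allI)
    fix N
    have "(\<integral>\<^sup>+x. ennreal (\<psi> N x) \<partial>Q) = ennreal (\<integral>x. \<psi> N x \<partial>Q)"
      using \<psi>i \<psi>0 by (intro nn_integral_eq_integral) auto
    then show "(\<integral>\<^sup>+x. ennreal (\<psi> N x) \<partial>Q) \<le> ennreal c"
      using \<psi>int[of N] by (simp add: ennreal_leI)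
  qed
  finally show ?thesis .
qed



lemma joint_law_kernel:
  assumes K: "K \<in> M \<rightarrow>\<^sub>M prob_algebra MW"
  shows "(\<lambda>x. distr (K x) (M \<Otimes>\<^sub>M MW) (\<lambda>w. (x, w))) \<in> M \<rightarrow>\<^sub>M prob_algebra (M \<Otimes>\<^sub>M MW)"
  by (rule measurable_distr_prob_space2[OF K]) simp

lemma joint_law_facts:
  assumes M: "prob_space M" and K: "K \<in> M \<rightarrow>\<^sub>M prob_algebra MW"
  shows "sets (joint_law M K MW) = sets (M \<Otimes>\<^sub>M MW)"
    "prob_space (joint_law M K MW)"
    "\<And>h. h \<in> borel_measurable (M \<Otimes>\<^sub>M MW) \<Longrightarrow>
       (\<integral>\<^sup>+p. h p \<partial>joint_law M K MW) = (\<integral>\<^sup>+x. \<integral>\<^sup>+w. h (x, w) \<partial>K x \<partial>M)"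
proof -
  interpret M: prob_space M by fact
  have Ms: "M \<in> space (prob_algebra M)" by (simp add: space_prob_algebra M)
  note N = joint_law_kernel[OF K]
  show "sets (joint_law M K MW) = sets (M \<Otimes>\<^sub>M MW)"
    unfolding joint_law_def by (rule sets_bind'[OF Ms N])
  show "prob_space (joint_law M K MW)"
    unfolding joint_law_def by (rule prob_space_bind'[OF Ms N])
  fix h :: "_ \<Rightarrow> ennreal" assume h: "h \<in> borel_measurable (M \<Otimes>\<^sub>M MW)"
  have "(\<integral>\<^sup>+p. h p \<partial>joint_law M K MW) =
      (\<integral>\<^sup>+x. \<integral>\<^sup>+p. h p \<partial>distr (K x) (M \<Otimes>\<^sub>M MW) (\<lambda>w. (x, w)) \<partial>M)"
    unfolding joint_law_def by (rule nn_integral_bind[OF h measurable_prob_algebraD[OF N]])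
  also have "\<dots> = (\<integral>\<^sup>+x. \<integral>\<^sup>+w. h (x, w) \<partial>K x \<partial>M)"
  proof (rule nn_integral_cong)
    fix x assume x: "x \<in> space M"
    have Kx: "sets (K x) = sets MW" using measurable_space[OF K x] by (simp add: space_prob_algebra)
    have "(\<lambda>w. (x, w)) \<in> K x \<rightarrow>\<^sub>M M \<Otimes>\<^sub>M MW"
      using x by (simp add: measurable_cong_sets[OF Kx refl])
    then show "(\<integral>\<^sup>+p. h p \<partial>distr (K x) (M \<Otimes>\<^sub>M MW) (\<lambda>w. (x, w))) = (\<integral>\<^sup>+w. h (x, w) \<partial>K x)"
      using h by (subst nn_integral_distr) auto
  qed
  finally show "(\<integral>\<^sup>+p. h p \<partial>joint_law M K MW) = (\<integral>\<^sup>+x. \<integral>\<^sup>+w. h (x, w) \<partial>K x \<partial>M)" .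
qed

lemma kernel_facts:
  assumes K: "K \<in> M \<rightarrow>\<^sub>M prob_algebra MW" and x: "x \<in> space M"
  shows "sets (K x) = sets MW" "space (K x) = space MW" "prob_space (K x)"
proof -
  show s: "sets (K x) = sets MW" "prob_space (K x)"
    using measurable_space[OF K x] by (auto simp: space_prob_algebra)
  show "space (K x) = space MW" using sets_eq_imp_space_eq[OF s(1)] .
qed

lemma joint_law_fst:
  assumes M: "prob_space M" and K: "K \<in> M \<rightarrow>\<^sub>M prob_algebra MW"
  shows "distr (joint_law M K MW) M fst = M"
proof (rule measure_eqI)
  note J = joint_law_facts[OF M K]
  show "sets (distr (joint_law M K MW) M fst) = sets M" by simp
  fix A assume A: "A \<in> sets (distr (joint_law M K MW) M fst)"
  then have A': "A \<in> sets M" by simp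
  have fm: "fst \<in> joint_law M K MW \<rightarrow>\<^sub>M M" by (simp add: measurable_cong_sets[OF J(1) refl])
  have "emeasure (distr (joint_law M K MW) M fst) A = (\<integral>\<^sup>+p. indicator A (fst p) \<partial>joint_law M K MW)"
    using A' fm by (simp add: nn_integral_indicator[symmetric] nn_integral_distr del: nn_integral_indicator)
  also have "\<dots> = (\<integral>\<^sup>+x. \<integral>\<^sup>+w. indicator A x \<partial>K x \<partial>M)"
    using A' by (subst J(3)) auto
  also have "\<dots> = (\<integral>\<^sup>+x. indicator A x \<partial>M)"
  proof (rule nn_integral_cong)
    fix x assume "x \<in> space M"
    then interpret Kx: prob_space "K x" using kernel_facts[OF K] by blast
    show "(\<integral>\<^sup>+w. indicator A x \<partial>K x) = indicator A x" by (simp add: Kx.emeasure_space_1)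
  qed
  also have "\<dots> = emeasure M A" using A' by simp
  finally show "emeasure (distr (joint_law M K MW) M fst) A = emeasure M A" .
qed



lemma resample:
  fixes n :: nat
  assumes mu: "prob_space \<mu>" and i: "i < n"
    and F: "F \<in> borel_measurable (PiM {..<n} (\<lambda>_. \<mu>))"
  shows "(\<integral>\<^sup>+z. \<integral>\<^sup>+s. F (s(i := z)) \<partial>PiM {..<n} (\<lambda>_. \<mu>) \<partial>\<mu>) = (\<integral>\<^sup>+s. F s \<partial>PiM {..<n} (\<lambda>_. \<mu>))"
proof -
  interpret mu: prob_space \<mu> by fact
  interpret P: product_prob_space "\<lambda>_. \<mu>"
    by (simp add: product_prob_space_def product_sigma_finite_def product_prob_space_axioms_def mu
        mu.sigma_finite_measure_axioms)
  define I where "I = {..<n} - {i}"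
  have I: "finite I" "i \<notin> I" "insert i I = {..<n}" using i unfolding I_def by auto
  have F': "F \<in> borel_measurable (PiM (insert i I) (\<lambda>_. \<mu>))" using F I(3) by simp
  have inner: "(\<integral>\<^sup>+s. F (s(i := z)) \<partial>PiM (insert i I) (\<lambda>_. \<mu>)) = (\<integral>\<^sup>+x. F (x(i := z)) \<partial>PiM I (\<lambda>_. \<mu>))"
    if z: "z \<in> space \<mu>" for z
  proof -
    have m: "(\<lambda>s. F (s(i := z))) \<in> borel_measurable (PiM (insert i I) (\<lambda>_. \<mu>))"
    proof (rule measurable_compose[OF _ F'])
      show "(\<lambda>s. s(i := z)) \<in> PiM (insert i I) (\<lambda>_. \<mu>) \<rightarrow>\<^sub>M PiM (insert i I) (\<lambda>_. \<mu>)"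
        by (rule measurable_fun_upd[where J="insert i I"]) (use z in auto)
    qed
    have "(\<integral>\<^sup>+s. F (s(i := z)) \<partial>PiM (insert i I) (\<lambda>_. \<mu>)) =
        (\<integral>\<^sup>+x. \<integral>\<^sup>+y. F ((x(i := y))(i := z)) \<partial>\<mu> \<partial>PiM I (\<lambda>_. \<mu>))"
      by (rule P.product_nn_integral_insert[OF I(1,2) m])
    also have "\<dots> = (\<integral>\<^sup>+x. F (x(i := z)) \<partial>PiM I (\<lambda>_. \<mu>))"
      by (simp add: mu.emeasure_space_1)
    finally show ?thesis .
  qed
  have "(\<integral>\<^sup>+z. \<integral>\<^sup>+s. F (s(i := z)) \<partial>PiM {..<n} (\<lambda>_. \<mu>) \<partial>\<mu>) =
      (\<integral>\<^sup>+z. \<integral>\<^sup>+x. F (x(i := z)) \<partial>PiM I (\<lambda>_. \<mu>) \<partial>\<mu>)"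
    using inner I(3) by (intro nn_integral_cong) simp
  also have "\<dots> = (\<integral>\<^sup>+s. F s \<partial>PiM (insert i I) (\<lambda>_. \<mu>))"
    by (rule P.product_nn_integral_insert_rev[OF I(1,2) F', symmetric])
  finally show ?thesis using I(3) by simp
qed

locale symsetup =
  fixes \<mu>' :: "'z measure" and MW :: "'w measure" and n :: nat and K :: "(nat \<Rightarrow> 'z) \<Rightarrow> 'w measure"
  assumes mu': "prob_space \<mu>'" and n: "n \<ge> 1"
    and K: "K \<in> PiM {..<n} (\<lambda>_. \<mu>') \<rightarrow>\<^sub>M prob_algebra MW"
begin

abbreviation "Sn \<equiv> PiM {..<n} (\<lambda>_. \<mu>')"

definition G :: "nat \<Rightarrow> 'z \<Rightarrow> 'w measure" where
  "G i z = Sn \<bind> (\<lambda>s. K (s(i mod n := z)))"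

definition Khat :: "'z \<Rightarrow> 'w measure" where
  "Khat z = measure_pmf (pmf_of_set {..<n}) \<bind> (\<lambda>i. G i z)"

lemma Sn_prob: "prob_space Sn"
  by (intro prob_space_PiM) (use mu' in auto)

lemma Sn_space: "Sn \<in> space (prob_algebra Sn)"
  by (simp add: space_prob_algebra Sn_prob)

lemma upd_meas: assumes j: "j < n" shows "(\<lambda>(z, s). s(j := z)) \<in> \<mu>' \<Otimes>\<^sub>M Sn \<rightarrow>\<^sub>M Sn"
proof -
  have "(\<lambda>p. (snd p)(j := fst p)) \<in> \<mu>' \<Otimes>\<^sub>M Sn \<rightarrow>\<^sub>M Sn"
    by (rule measurable_fun_upd[where J="{..<n}"]) (use j in auto)
  then show ?thesis by (simp add: case_prod_beta)
qed

lemma G_meas: "G i \<in> \<mu>' \<rightarrow>\<^sub>M prob_algebra MW"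
proof -
  have j: "i mod n < n" using n by simp
  have "(\<lambda>(z, s). K (s(i mod n := z))) \<in> \<mu>' \<Otimes>\<^sub>M Sn \<rightarrow>\<^sub>M prob_algebra MW"
    using measurable_compose[OF upd_meas[OF j] K] by (simp add: case_prod_beta)
  then show ?thesis unfolding G_def
    by (intro measurable_bind_prob_space2[OF measurable_const[OF Sn_space]]) simp
qed

lemma U_space: "measure_pmf (pmf_of_set {..<n}) \<in> space (prob_algebra (count_space UNIV))"
  by (simp add: space_prob_algebra measure_pmf.prob_space_axioms)

lemma Khat_meas: "Khat \<in> \<mu>' \<rightarrow>\<^sub>M prob_algebra MW"
proof -
  have "(\<lambda>p. G (snd p) (fst p)) \<in> \<mu>' \<Otimes>\<^sub>M count_space UNIV \<rightarrow>\<^sub>M prob_algebra MW"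
    by (rule measurable_compose_countable[where f="\<lambda>i p. G i (fst p)"])
       (auto intro: measurable_compose[OF measurable_fst G_meas])
  then have "(\<lambda>(z, i). G i z) \<in> \<mu>' \<Otimes>\<^sub>M count_space UNIV \<rightarrow>\<^sub>M prob_algebra MW"
    by (simp add: case_prod_beta)
  then show ?thesis unfolding Khat_def
    by (intro measurable_bind_prob_space2[OF measurable_const[OF U_space]]) simp
qed

lemma G_nn:
  assumes z: "z \<in> space \<mu>'" and h: "h \<in> borel_measurable MW"
  shows "(\<integral>\<^sup>+w. h w \<partial>G i z) = (\<integral>\<^sup>+s. \<integral>\<^sup>+w. h w \<partial>K (s(i mod n := z)) \<partial>Sn)"
proof -
  have j: "i mod n < n" using n by simp
  have "(\<lambda>s. K (s(i mod n := z))) \<in> Sn \<rightarrow>\<^sub>M prob_algebra MW"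
  proof (rule measurable_compose[OF _ K])
    show "(\<lambda>s. s(i mod n := z)) \<in> Sn \<rightarrow>\<^sub>M Sn"
      by (rule measurable_fun_upd[where J="{..<n}"]) (use z j in auto)
  qed
  then show ?thesis unfolding G_def
    by (rule nn_integral_bind[OF h measurable_prob_algebraD])
qed

lemma Khat_nn:
  assumes z: "z \<in> space \<mu>'" and h: "h \<in> borel_measurable MW"
  shows "(\<integral>\<^sup>+w. h w \<partial>Khat z) = (\<Sum>i<n. \<integral>\<^sup>+w. h w \<partial>G i z) / of_nat n"
proof -
  have ne: "{..<n} \<noteq> {}" using n by (auto simp: lessThan_empty_iff)
  have "(\<lambda>i. G i z) \<in> measure_pmf (pmf_of_set {..<n}) \<rightarrow>\<^sub>M subprob_algebra MW"
  proof -
    have "(\<lambda>i. G i z) \<in> count_space UNIV \<rightarrow>\<^sub>M subprob_algebra MW"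
      using measurable_space[OF measurable_prob_algebraD[OF G_meas] z] by auto
    then show ?thesis by (simp add: measurable_cong_sets[OF sets_measure_pmf_count_space refl])
  qed
  then have "(\<integral>\<^sup>+w. h w \<partial>Khat z) = (\<integral>\<^sup>+i. \<integral>\<^sup>+w. h w \<partial>G i z \<partial>measure_pmf (pmf_of_set {..<n}))"
    unfolding Khat_def by (rule nn_integral_bind[OF h])
  also have "\<dots> = (\<Sum>i<n. \<integral>\<^sup>+w. h w \<partial>G i z) / of_nat n"
    by (subst nn_integral_pmf_of_set[OF ne]) simp_all
  finally show ?thesis .
qed

lemma transfer_nn:
  assumes h: "h \<in> borel_measurable (\<mu>' \<Otimes>\<^sub>M MW)"
  shows "(\<integral>\<^sup>+p. h p \<partial>joint_law \<mu>' Khat MW) =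
    (\<Sum>i<n. \<integral>\<^sup>+p. h (fst p i, snd p) \<partial>joint_law Sn K MW) / of_nat n"
proof -
  have hz: "(\<lambda>w. h (z, w)) \<in> borel_measurable MW" if "z \<in> space \<mu>'" for z
    using measurable_Pair2[OF h that] .
  have am: "(\<lambda>z. \<integral>\<^sup>+w. h (z, w) \<partial>G i z) \<in> borel_measurable \<mu>'" for i
    by (rule nn_integral_measurable_subprob_algebra2[OF _ measurable_prob_algebraD[OF G_meas]])
       (use h in \<open>simp add: case_prod_beta\<close>)
  have "(\<integral>\<^sup>+p. h p \<partial>joint_law \<mu>' Khat MW) = (\<integral>\<^sup>+z. \<integral>\<^sup>+w. h (z, w) \<partial>Khat z \<partial>\<mu>')"
    by (rule joint_law_facts(3)[OF mu' Khat_meas h])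
  also have "\<dots> = (\<integral>\<^sup>+z. (\<Sum>i<n. \<integral>\<^sup>+w. h (z, w) \<partial>G i z) / of_nat n \<partial>\<mu>')"
    by (intro nn_integral_cong Khat_nn hz)
  also have "\<dots> = (\<Sum>i<n. \<integral>\<^sup>+z. \<integral>\<^sup>+w. h (z, w) \<partial>G i z \<partial>\<mu>') / of_nat n"
    using am by (simp add: nn_integral_divide nn_integral_sum)
  also have "\<dots> = (\<Sum>i<n. \<integral>\<^sup>+p. h (fst p i, snd p) \<partial>joint_law Sn K MW) / of_nat n"
  proof (intro arg_cong2[where f="(/)"] sum.cong refl)
    fix i assume i: "i \<in> {..<n}"
    define F where "F t = (\<integral>\<^sup>+w. h (t i, w) \<partial>K t)" for t
    have m1: "(\<lambda>p. (fst p i, snd p)) \<in> Sn \<Otimes>\<^sub>M MW \<rightarrow>\<^sub>M \<mu>' \<Otimes>\<^sub>M MW"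
      using i by measurable
    have hi': "(\<lambda>p. h (fst p i, snd p)) \<in> borel_measurable (Sn \<Otimes>\<^sub>M MW)"
      using measurable_compose[OF m1 h] by (simp add: comp_def)
    have hi: "(\<lambda>(t, w). h (t i, w)) \<in> borel_measurable (Sn \<Otimes>\<^sub>M MW)"
      using hi' by (simp add: case_prod_beta)
    have Fm: "F \<in> borel_measurable Sn" unfolding F_def
      by (rule nn_integral_measurable_subprob_algebra2[OF _ measurable_prob_algebraD[OF K]])
         (use hi in \<open>simp add: case_prod_beta\<close>)
    have "(\<integral>\<^sup>+z. \<integral>\<^sup>+w. h (z, w) \<partial>G i z \<partial>\<mu>') = (\<integral>\<^sup>+z. \<integral>\<^sup>+s. F (s(i := z)) \<partial>Sn \<partial>\<mu>')"
    proof (rule nn_integral_cong)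
      fix z assume z: "z \<in> space \<mu>'"
      show "(\<integral>\<^sup>+w. h (z, w) \<partial>G i z) = (\<integral>\<^sup>+s. F (s(i := z)) \<partial>Sn)"
        using G_nn[OF z hz[OF z], of i] i unfolding F_def by simp
    qed
    also have "\<dots> = (\<integral>\<^sup>+s. F s \<partial>Sn)"
      using i by (intro resample mu' Fm) simp
    also have "\<dots> = (\<integral>\<^sup>+p. h (fst p i, snd p) \<partial>joint_law Sn K MW)"
    proof -
      show ?thesis unfolding F_def using joint_law_facts(3)[OF Sn_prob K hi'] by simp
    qed
    finally show "(\<integral>\<^sup>+z. \<integral>\<^sup>+w. h (z, w) \<partial>G i z \<partial>\<mu>') = (\<integral>\<^sup>+p. h (fst p i, snd p) \<partial>joint_law Sn K MW)" .
  qed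
  finally show ?thesis .
qed

lemma transfer_nn':
  assumes h: "h \<in> borel_measurable (\<mu>' \<Otimes>\<^sub>M MW)"
  shows "of_nat n * (\<integral>\<^sup>+p. h p \<partial>joint_law \<mu>' Khat MW) =
    (\<Sum>i<n. \<integral>\<^sup>+p. h (fst p i, snd p) \<partial>joint_law Sn K MW)"
proof -
  have n0: "(of_nat n :: ennreal) \<noteq> 0" using n by simp
  show ?thesis unfolding transfer_nn[OF h] ennreal_times_divide
    by (subst mult.commute) (rule ennreal_mult_divide_eq[OF n0], simp)
qed

lemma Jh_sets: "sets (joint_law \<mu>' Khat MW) = sets (\<mu>' \<Otimes>\<^sub>M MW)"
  by (rule joint_law_facts(1)[OF mu' Khat_meas])

lemma J_sets: "sets (joint_law Sn K MW) = sets (Sn \<Otimes>\<^sub>M MW)"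
  by (rule joint_law_facts(1)[OF Sn_prob K])

lemma Jh_snd: "distr (joint_law \<mu>' Khat MW) MW snd = distr (joint_law Sn K MW) MW snd"
proof (rule measure_eqI)
  show "sets (distr (joint_law \<mu>' Khat MW) MW snd) = sets (distr (joint_law Sn K MW) MW snd)" by simp
  fix B assume "B \<in> sets (distr (joint_law \<mu>' Khat MW) MW snd)"
  then have B: "B \<in> sets MW" by simp
  have s1: "snd \<in> joint_law \<mu>' Khat MW \<rightarrow>\<^sub>M MW" by (simp add: measurable_cong_sets[OF Jh_sets refl])
  have s2: "snd \<in> joint_law Sn K MW \<rightarrow>\<^sub>M MW" by (simp add: measurable_cong_sets[OF J_sets refl])
  define X where "X = emeasure (distr (joint_law Sn K MW) MW snd) B"
  have X: "X = (\<integral>\<^sup>+p. indicator B (snd p) \<partial>joint_law Sn K MW)"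
    unfolding X_def using B s2 by (simp add: nn_integral_indicator[symmetric] nn_integral_distr del: nn_integral_indicator)
  have hm: "(\<lambda>p. indicator B (snd p) :: ennreal) \<in> borel_measurable (\<mu>' \<Otimes>\<^sub>M MW)" using B by measurable
  have "emeasure (distr (joint_law \<mu>' Khat MW) MW snd) B = (\<integral>\<^sup>+p. indicator B (snd p) \<partial>joint_law \<mu>' Khat MW)"
    using B s1 by (simp add: nn_integral_indicator[symmetric] nn_integral_distr del: nn_integral_indicator)
  also have "\<dots> = (\<Sum>i<n. X) / of_nat n"
    unfolding transfer_nn[OF hm] X by simp
  also have "\<dots> = X" using n by (simp add: ennreal_mult_divide_eq mult.commute)
  finally show "emeasure (distr (joint_law \<mu>' Khat MW) MW snd) B = emeasure (distr (joint_law Sn K MW) MW snd) B"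
    unfolding X_def .
qed

lemma nn_fin: fixes f :: "_ \<Rightarrow> real" assumes "integrable M f"
  shows "(\<integral>\<^sup>+x. ennreal (f x) \<partial>M) < \<infinity>"
proof -
  have "(\<integral>\<^sup>+x. ennreal (f x) \<partial>M) \<le> (\<integral>\<^sup>+x. ennreal (norm (f x)) \<partial>M)"
    by (intro nn_integral_mono) (simp add: ennreal_leI)
  also have "\<dots> < \<infinity>" using assms by (simp add: integrable_iff_bounded)
  finally show ?thesis .
qed

lemma transfer_int:
  fixes h :: "'z \<times> 'w \<Rightarrow> real"
  assumes h: "h \<in> borel_measurable (\<mu>' \<Otimes>\<^sub>M MW)" and ih: "integrable (joint_law \<mu>' Khat MW) h"
    and ihi: "\<And>i. i < n \<Longrightarrow> integrable (joint_law Sn K MW) (\<lambda>p. h (fst p i, snd p))"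
  shows "real n * (\<integral>p. h p \<partial>joint_law \<mu>' Khat MW) = (\<Sum>i<n. \<integral>p. h (fst p i, snd p) \<partial>joint_law Sn K MW)"
proof -
  let ?Jh = "joint_law \<mu>' Khat MW" and ?J = "joint_law Sn K MW"
  have hp: "(\<lambda>p. ennreal (h p)) \<in> borel_measurable (\<mu>' \<Otimes>\<^sub>M MW)" using h by measurable
  have hn: "(\<lambda>p. ennreal (- h p)) \<in> borel_measurable (\<mu>' \<Otimes>\<^sub>M MW)" using h by measurable
  have e: "real n * enn2real X = enn2real (\<Sum>i<n. Y i)" if XY: "of_nat n * X = (\<Sum>i<n. Y i)"
     and Yf: "\<And>i. i < n \<Longrightarrow> Y i < \<infinity>" for X and Y :: "nat \<Rightarrow> ennreal"
  proof -
    have "enn2real (of_nat n * X) = enn2real (\<Sum>i<n. Y i)" using XY by simp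
    then show ?thesis by (simp add: enn2real_mult)
  qed
  have ihi': "integrable ?J (\<lambda>p. - h (fst p i, snd p))" if "i < n" for i using ihi[OF that] by simp
  have f1: "\<And>i. i < n \<Longrightarrow> (\<integral>\<^sup>+p. ennreal (h (fst p i, snd p)) \<partial>?J) < \<infinity>"
    by (rule nn_fin[OF ihi])
  have f2: "\<And>i. i < n \<Longrightarrow> (\<integral>\<^sup>+p. ennreal (- h (fst p i, snd p)) \<partial>?J) < \<infinity>"
    by (rule nn_fin[OF ihi'])
  have "real n * (\<integral>p. h p \<partial>?Jh) =
      real n * enn2real (\<integral>\<^sup>+p. ennreal (h p) \<partial>?Jh) - real n * enn2real (\<integral>\<^sup>+p. ennreal (- h p) \<partial>?Jh)"
    using real_lebesgue_integral_def[OF ih] by (simp add: right_diff_distrib)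
  also have "\<dots> = enn2real (\<Sum>i<n. \<integral>\<^sup>+p. ennreal (h (fst p i, snd p)) \<partial>?J)
      - enn2real (\<Sum>i<n. \<integral>\<^sup>+p. ennreal (- h (fst p i, snd p)) \<partial>?J)"
  proof -
    show ?thesis using e[OF transfer_nn'[OF hp] f1] e[OF transfer_nn'[OF hn] f2] by simp
  qed
  also have "\<dots> = (\<Sum>i<n. enn2real (\<integral>\<^sup>+p. ennreal (h (fst p i, snd p)) \<partial>?J)
      - enn2real (\<integral>\<^sup>+p. ennreal (- h (fst p i, snd p)) \<partial>?J))"
  proof -
    have a: "enn2real (\<Sum>i<n. \<integral>\<^sup>+p. ennreal (h (fst p i, snd p)) \<partial>?J) =
        (\<Sum>i<n. enn2real (\<integral>\<^sup>+p. ennreal (h (fst p i, snd p)) \<partial>?J))"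
      by (subst enn2real_sum) (use f1 in auto)
    have b: "enn2real (\<Sum>i<n. \<integral>\<^sup>+p. ennreal (- h (fst p i, snd p)) \<partial>?J) =
        (\<Sum>i<n. enn2real (\<integral>\<^sup>+p. ennreal (- h (fst p i, snd p)) \<partial>?J))"
      by (subst enn2real_sum) (use f2 in auto)
    show ?thesis unfolding a b by (simp add: sum_subtractf)
  qed
  also have "\<dots> = (\<Sum>i<n. \<integral>p. h (fst p i, snd p) \<partial>?J)"
    using ihi by (intro sum.cong refl) (simp add: real_lebesgue_integral_def)
  finally show ?thesis .
qed

end



lemma bdd_int:
  fixes f :: "_ \<Rightarrow> real"
  assumes "prob_space M" "f \<in> borel_measurable M" "\<And>x. x \<in> space M \<Longrightarrow> \<bar>f x\<bar> \<le> B"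
  shows "integrable M f"
proof -
  interpret prob_space M by fact
  show ?thesis by (rule integrable_const_bound[where B=B]) (use assms in \<open>auto intro!: AE_I2\<close>)
qed

lemma prod_int_one:
  fixes \<phi> :: "'z \<Rightarrow> 'w \<Rightarrow> real" and n :: nat
  assumes mu: "prob_space \<mu>" and PW: "prob_space PW"
    and phim: "(\<lambda>(z, w). \<phi> z w) \<in> borel_measurable (\<mu> \<Otimes>\<^sub>M PW)"
    and phib: "\<And>z w. \<bar>\<phi> z w\<bar> \<le> C"
    and phi1: "\<And>w. w \<in> space PW \<Longrightarrow> (\<integral>z. \<phi> z w \<partial>\<mu>) = 1"
  shows "(\<integral>p. (\<Prod>i<n. \<phi> (fst p i) (snd p)) \<partial>(PiM {..<n} (\<lambda>_. \<mu>) \<Otimes>\<^sub>M PW)) = 1"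
proof -
  interpret mu: prob_space \<mu> by fact
  interpret PW: prob_space PW by fact
  interpret P: product_prob_space "\<lambda>_. \<mu>"
    by (simp add: product_prob_space_def product_sigma_finite_def product_prob_space_axioms_def mu
        mu.sigma_finite_measure_axioms)
  have Sp: "prob_space (PiM {..<n} (\<lambda>_. \<mu>))" by (intro prob_space_PiM) (use mu in auto)
  interpret S: prob_space "PiM {..<n} (\<lambda>_. \<mu>)" by fact
  interpret SP: pair_sigma_finite "PiM {..<n} (\<lambda>_. \<mu>)" PW
    by (simp add: pair_sigma_finite_def S.sigma_finite_measure_axioms PW.sigma_finite_measure_axioms)
  have C0: "C \<ge> 0" using phib[of undefined undefined] by simp
  have m: "(\<lambda>p. \<Prod>i<n. \<phi> (fst p i) (snd p)) \<in> borel_measurable (PiM {..<n} (\<lambda>_. \<mu>) \<Otimes>\<^sub>M PW)"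
  proof (intro borel_measurable_prod)
    fix i assume i: "i \<in> {..<n}"
    have "(\<lambda>p. (fst p i, snd p)) \<in> PiM {..<n} (\<lambda>_. \<mu>) \<Otimes>\<^sub>M PW \<rightarrow>\<^sub>M \<mu> \<Otimes>\<^sub>M PW"
      using i by measurable
    from measurable_compose[OF this phim] show "(\<lambda>p. \<phi> (fst p i) (snd p)) \<in> borel_measurable (PiM {..<n} (\<lambda>_. \<mu>) \<Otimes>\<^sub>M PW)"
      by (simp add: comp_def)
  qed
  have b: "\<bar>\<Prod>i<n. \<phi> (fst p i) (snd p)\<bar> \<le> C ^ n" for p
  proof -
    have "(\<Prod>i<n. \<bar>\<phi> (fst p i) (snd p)\<bar>) \<le> (\<Prod>i<n. C)"
      using phib by (intro prod_mono) auto
    then show ?thesis by (simp add: abs_prod)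
  qed
  have int: "integrable (PiM {..<n} (\<lambda>_. \<mu>) \<Otimes>\<^sub>M PW) (\<lambda>p. \<Prod>i<n. \<phi> (fst p i) (snd p))"
    by (rule bdd_int[OF prob_space_pair[OF Sp PW] m b])
  have "(\<integral>p. (\<Prod>i<n. \<phi> (fst p i) (snd p)) \<partial>(PiM {..<n} (\<lambda>_. \<mu>) \<Otimes>\<^sub>M PW)) =
      (\<integral>w. (\<integral>s. (\<Prod>i<n. \<phi> (s i) w) \<partial>PiM {..<n} (\<lambda>_. \<mu>)) \<partial>PW)"
  proof -
    have eq: "(\<lambda>p. \<Prod>i<n. \<phi> (fst p i) (snd p)) = (\<lambda>(s, w). \<Prod>i<n. \<phi> (s i) w)" by auto
    show ?thesis unfolding eq using SP.integral_snd[of "\<lambda>s w. \<Prod>i<n. \<phi> (s i) w"] int[unfolded eq]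
      by simp
  qed
  also have "\<dots> = (\<integral>w. 1 \<partial>PW)"
  proof (rule Bochner_Integration.integral_cong[OF refl])
    fix w assume w: "w \<in> space PW"
    have mw: "(\<lambda>z. \<phi> z w) \<in> borel_measurable \<mu>"
      using measurable_Pair1[OF phim w] by simp
    have "(\<integral>s. (\<Prod>i<n. \<phi> (s i) w) \<partial>PiM {..<n} (\<lambda>_. \<mu>)) = (\<Prod>i<n. \<integral>z. \<phi> z w \<partial>\<mu>)"
      by (rule P.product_integral_prod) (auto intro: bdd_int[OF mu mw phib])
    also have "\<dots> = 1" using phi1[OF w] by simp
    finally show "(\<integral>s. (\<Prod>i<n. \<phi> (s i) w) \<partial>PiM {..<n} (\<lambda>_. \<mu>)) = 1" .
  qed
  also have "\<dots> = 1" by (simp add: PW.prob_space)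
  finally show ?thesis .
qed



context symsetup
begin

abbreviation "J \<equiv> joint_law Sn K MW"
abbreviation "Jh \<equiv> joint_law \<mu>' Khat MW"
abbreviation "PW \<equiv> distr J MW snd"

lemma J_prob: "prob_space J" by (rule joint_law_facts(2)[OF Sn_prob K])
lemma Jh_prob: "prob_space Jh" by (rule joint_law_facts(2)[OF mu' Khat_meas])
lemma snd_J: "snd \<in> J \<rightarrow>\<^sub>M MW" by (simp add: measurable_cong_sets[OF J_sets refl])
lemma PW_prob: "prob_space PW" by (rule prob_space.prob_space_distr[OF J_prob snd_J])
lemma PW_sets: "sets PW = sets MW" by simp

lemma MI_bound:
  assumes r: "r \<ge> 0" and MI: "mutual_info Sn MW J \<le> ennreal r"
  shows "mutual_info \<mu>' MW Jh \<le> ennreal (r / real n)"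
proof -
  interpret mu: prob_space \<mu>' by (rule mu')
  interpret PW: prob_space PW by (rule PW_prob)
  interpret S: prob_space Sn by (rule Sn_prob)
  interpret MP: pair_sigma_finite \<mu>' PW
    by (simp add: pair_sigma_finite_def mu.sigma_finite_measure_axioms PW.sigma_finite_measure_axioms)
  have n0: "real n > 0" using n by simp
  define Q where "Q = Sn \<Otimes>\<^sub>M PW"
  define Q1 where "Q1 = \<mu>' \<Otimes>\<^sub>M PW"
  have KLJ: "KL_div J Q \<le> ennreal r"
    using MI unfolding mutual_info_def Q_def joint_law_fst[OF Sn_prob K] .
  have mi1: "mutual_info \<mu>' MW Jh = KL_div Jh Q1"
    unfolding mutual_info_def Q1_def joint_law_fst[OF mu' Khat_meas] Jh_snd ..
  have Qp: "prob_space Q" unfolding Q_def by (rule prob_space_pair[OF Sn_prob PW_prob])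
  have Q1p: "prob_space Q1" unfolding Q1_def by (rule prob_space_pair[OF mu' PW_prob])
  have sQ: "sets J = sets Q" unfolding Q_def J_sets by (rule sets_pair_measure_cong) simp_all
  have sQ1: "sets Jh = sets Q1" unfolding Q1_def Jh_sets by (rule sets_pair_measure_cong) simp_all
  have fin: "KL_div J Q \<noteq> \<infinity>" using KLJ by (auto simp: top_unique)
  have KLr: "enn2real (KL_div J Q) \<le> r" using KLJ r fin
    by (metis enn2real_ennreal enn2real_mono ennreal_less_top)
  show ?thesis unfolding mi1
  proof (rule DV_upper[OF Jh_prob Q1p sQ1])
    show "0 \<le> r / real n" using r by simp
    fix g :: "'z \<times> 'w \<Rightarrow> real" and B :: real
    assume gm: "g \<in> borel_measurable Q1" and gb: "\<And>x. \<bar>g x\<bar> \<le> B"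
    show "(\<integral>x. g x \<partial>Jh) - ln (\<integral>x. exp (g x) \<partial>Q1) \<le> r / real n"
    proof -
      have B0: "B \<ge> 0" using gb[of undefined] by simp
      have gm1[measurable]: "g \<in> borel_measurable (\<mu>' \<Otimes>\<^sub>M PW)" using gm unfolding Q1_def .
      have gm2: "g \<in> borel_measurable (\<mu>' \<Otimes>\<^sub>M MW)"
        using gm1 by (simp add: measurable_cong_sets[OF sets_pair_measure_cong[OF refl PW_sets] refl])
      have gb2: "-B \<le> g x" "g x \<le> B" for x using gb[of x] by linarith+
      define hf where "hf w = (\<integral>z. exp (g (z, w)) \<partial>\<mu>')" for w
      have hm: "hf \<in> borel_measurable PW" unfolding hf_def by measurable
      have ezm: "(\<lambda>z. exp (g (z, w))) \<in> borel_measurable \<mu>'" if "w \<in> space PW" for w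
        using measurable_Pair1[OF gm1 that] by measurable
      have ezi: "integrable \<mu>' (\<lambda>z. exp (g (z, w)))" if "w \<in> space PW" for w
        by (rule bdd_int[OF mu' ezm[OF that], where B="exp B"]) (use gb2 in simp)
      have hb: "exp (-B) \<le> hf w" "hf w \<le> exp B" if w: "w \<in> space PW" for w
      proof -
        have "(\<integral>z. exp (-B) \<partial>\<mu>') \<le> hf w" unfolding hf_def
          using ezi[OF w] gb2 by (intro integral_mono) auto
        then show "exp (-B) \<le> hf w" by (simp add: mu.prob_space)
        have "hf w \<le> (\<integral>z. exp B \<partial>\<mu>')" unfolding hf_def
          using ezi[OF w] gb2 by (intro integral_mono) auto
        then show "hf w \<le> exp B" by (simp add: mu.prob_space)
      qed
      define hf' where "hf' w = max (exp (-B)) (min (exp B) (hf w))" for w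
      have hf'_eq: "hf' w = hf w" if "w \<in> space PW" for w
        unfolding hf'_def using hb[OF that] by simp
      have hf'm: "hf' \<in> borel_measurable PW" unfolding hf'_def using hm by measurable
      have hf'b: "exp (-B) \<le> hf' w" "hf' w \<le> exp B" for w
        unfolding hf'_def using B0 by (auto simp: max_def min_def)
      have hf'pos: "hf' w > 0" for w using hf'b(1)[of w] exp_gt_zero[of "-B"] by linarith
      have lnb: "\<bar>ln (hf' w)\<bar> \<le> B" for w
      proof -
        have "ln (exp (-B)) \<le> ln (hf' w)" using hf'b(1) by (subst ln_le_cancel_iff) (auto simp: hf'pos)
        moreover have "ln (hf' w) \<le> ln (exp B)" using hf'b(2) by (subst ln_le_cancel_iff) (auto simp: hf'pos)
        ultimately show ?thesis by simp
      qed
      define Gf where "Gf p = (\<Sum>i<n. g (fst p i, snd p) - ln (hf' (snd p)))" for p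
      have cm: "(\<lambda>p. (fst p i, snd p)) \<in> Sn \<Otimes>\<^sub>M PW \<rightarrow>\<^sub>M \<mu>' \<Otimes>\<^sub>M PW" if "i < n" for i
      proof (rule measurable_Pair)
        show "(\<lambda>p. fst p i) \<in> Sn \<Otimes>\<^sub>M PW \<rightarrow>\<^sub>M \<mu>'"
          by (rule measurable_compose[OF measurable_fst measurable_component_singleton]) (use that in simp)
      qed (rule measurable_snd)
      have gim: "(\<lambda>p. g (fst p i, snd p)) \<in> borel_measurable (Sn \<Otimes>\<^sub>M PW)" if "i < n" for i
        using measurable_compose[OF cm[OF that] gm1] by (simp add: comp_def)
      have lnm: "(\<lambda>p. ln (hf' (snd p))) \<in> borel_measurable (Sn \<Otimes>\<^sub>M PW)"
        using hf'm by measurable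
      have Gm: "Gf \<in> borel_measurable Q" unfolding Q_def Gf_def
        using gim lnm by (intro borel_measurable_sum borel_measurable_diff) auto
      have Gb: "\<bar>Gf p\<bar> \<le> real n * (2 * B)" for p
      proof -
        have "\<bar>Gf p\<bar> \<le> (\<Sum>i<n. \<bar>g (fst p i, snd p) - ln (hf' (snd p))\<bar>)"
          unfolding Gf_def by (rule sum_abs)
        also have "\<dots> \<le> (\<Sum>i<n. 2 * B)"
        proof (intro sum_mono)
          fix i show "\<bar>g (fst p i, snd p) - ln (hf' (snd p))\<bar> \<le> 2 * B"
            using gb[of "(fst p i, snd p)"] lnb[of "snd p"] by linarith
        qed
        finally show ?thesis by simp
      qed
      have DVl: "(\<integral>p. Gf p \<partial>J) - ln (\<integral>p. exp (Gf p) \<partial>Q) \<le> enn2real (KL_div J Q)"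
        by (rule DV_lower[OF J_prob Qp sQ Gm Gb fin])
      define \<phi> where "\<phi> z w = exp (g (z, w)) / hf' w" for z w
      have expG: "exp (Gf p) = (\<Prod>i<n. \<phi> (fst p i) (snd p))" for p
        unfolding Gf_def \<phi>_def by (simp add: exp_sum exp_diff hf'pos)
      have \<phi>m: "(\<lambda>(z, w). \<phi> z w) \<in> borel_measurable (\<mu>' \<Otimes>\<^sub>M PW)"
        unfolding \<phi>_def using hf'm by measurable
      have \<phi>b: "\<bar>\<phi> z w\<bar> \<le> exp B / exp (-B)" for z w
      proof -
        have "\<bar>\<phi> z w\<bar> = exp (g (z, w)) / hf' w" unfolding \<phi>_def using hf'pos[of w] by simp
        also have "\<dots> \<le> exp B / hf' w" using gb2 hf'pos[of w] by (intro divide_right_mono) auto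
        also have "\<dots> \<le> exp B / exp (-B)" using hf'b(1)[of w] hf'pos[of w] by (intro divide_left_mono) auto
        finally show ?thesis .
      qed
      have \<phi>1: "(\<integral>z. \<phi> z w \<partial>\<mu>') = 1" if w: "w \<in> space PW" for w
      proof -
        have "(\<integral>z. \<phi> z w \<partial>\<mu>') = hf w / hf' w" unfolding \<phi>_def hf_def by simp
        also have "\<dots> = 1" using hf'_eq[OF w] hf'pos[of w] by simp
        finally show ?thesis .
      qed
      have EQ: "(\<integral>p. exp (Gf p) \<partial>Q) = 1"
        unfolding expG Q_def by (rule prod_int_one[OF mu' PW_prob \<phi>m \<phi>b \<phi>1])
      have mJ: "f \<in> borel_measurable J" if "f \<in> borel_measurable (Sn \<Otimes>\<^sub>M PW)" for f :: "_ \<Rightarrow> real"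
        using that sQ unfolding Q_def by (simp add: measurable_cong_sets[OF sQ[unfolded Q_def] refl])
      have gJ: "integrable J (\<lambda>p. g (fst p i, snd p))" if "i < n" for i
        by (rule bdd_int[OF J_prob mJ[OF gim[OF that]], where B=B]) (use gb in simp)
      have lJ: "integrable J (\<lambda>p. ln (hf' (snd p)))"
        by (rule bdd_int[OF J_prob mJ[OF lnm], where B=B]) (use lnb in simp)
      have gJh: "integrable Jh g"
        by (rule bdd_int[OF Jh_prob _ , where B=B])
           (use gb gm in \<open>simp_all add: measurable_cong_sets[OF sQ1 refl]\<close>)
      have lnPW: "(\<integral>p. ln (hf' (snd p)) \<partial>J) = (\<integral>w. ln (hf' w) \<partial>PW)"
      proof -
        have "(\<lambda>w. ln (hf' w)) \<in> borel_measurable MW"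
          using hf'm by (simp add: measurable_cong_sets[OF PW_sets refl])
        then show ?thesis by (subst integral_distr[OF snd_J]) auto
      qed
      have "(\<integral>p. Gf p \<partial>J) = (\<Sum>i<n. (\<integral>p. g (fst p i, snd p) \<partial>J) - (\<integral>p. ln (hf' (snd p)) \<partial>J))"
        unfolding Gf_def using gJ lJ
        by (subst Bochner_Integration.integral_sum) (auto intro!: sum.cong Bochner_Integration.integral_diff)
      also have "\<dots> = real n * (\<integral>p. g p \<partial>Jh) - real n * (\<integral>w. ln (hf' w) \<partial>PW)"
        unfolding sum_subtractf lnPW using transfer_int[OF gm2 gJh gJ] by simp
      finally have GJ: "(\<integral>p. Gf p \<partial>J) = real n * (\<integral>p. g p \<partial>Jh) - real n * (\<integral>w. ln (hf' w) \<partial>PW)" .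
      define m where "m = (\<integral>w. hf' w \<partial>PW)"
      have hf'i: "integrable PW hf'" by (rule bdd_int[OF PW_prob hf'm, where B="exp B"]) (use hf'b hf'pos in \<open>auto simp: less_imp_le\<close>)
      have "exp (-B) \<le> m"
      proof -
        have "(\<integral>w. exp (-B) \<partial>PW) \<le> m" unfolding m_def using hf'i hf'b by (intro integral_mono) auto
        then show ?thesis using PW.prob_space by simp
      qed
      then have mpos: "m > 0" using exp_gt_zero[of "-B"] by linarith
      have mQ1: "m = (\<integral>x. exp (g x) \<partial>Q1)"
      proof -
        have ei: "integrable (\<mu>' \<Otimes>\<^sub>M PW) (\<lambda>(z, w). exp (g (z, w)))"
          by (rule bdd_int[OF prob_space_pair[OF mu' PW_prob], where B="exp B"]) (use gb2 in auto)
        have "m = (\<integral>w. hf w \<partial>PW)" unfolding m_def using hf'_eq by (intro Bochner_Integration.integral_cong) auto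
        also have "\<dots> = (\<integral>x. exp (g x) \<partial>(\<mu>' \<Otimes>\<^sub>M PW))"
        proof -
          have eq: "(\<lambda>(z, w). exp (g (z, w))) = (\<lambda>x. exp (g x))" by auto
          show ?thesis unfolding hf_def using MP.integral_snd[OF ei] unfolding eq by simp
        qed
        finally show ?thesis unfolding Q1_def .
      qed
      have jen: "(\<integral>w. ln (hf' w) \<partial>PW) \<le> ln m"
      proof -
        have pt: "ln (hf' w) \<le> ln m + hf' w / m - 1" for w
        proof -
          have "ln (hf' w / m) \<le> hf' w / m - 1" using hf'pos[of w] mpos by (intro ln_le_minus_one) simp
          then show ?thesis using hf'pos[of w] mpos by (simp add: ln_div)
        qed
        have li: "integrable PW (\<lambda>w. ln (hf' w))" by (rule bdd_int[OF PW_prob _, where B=B]) (use hf'm lnb in auto)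
        have "(\<integral>w. ln (hf' w) \<partial>PW) \<le> (\<integral>w. ln m + hf' w / m - 1 \<partial>PW)"
          using pt li hf'i by (intro integral_mono) auto
        also have "\<dots> = ln m + m / m - 1" using hf'i PW.prob_space unfolding m_def by simp
        finally show ?thesis using mpos by simp
      qed
      have "real n * (\<integral>p. g p \<partial>Jh) - real n * (\<integral>w. ln (hf' w) \<partial>PW) \<le> r"
        using DVl EQ KLr GJ by simp
      then have "real n * ((\<integral>p. g p \<partial>Jh) - ln m) \<le> r"
        using jen n0 by (smt (verit) mult_left_mono right_diff_distrib)
      then have "(\<integral>p. g p \<partial>Jh) - ln m \<le> r / real n" using n0 by (simp add: field_simps)
      then show ?thesis unfolding mQ1 .
    qed
  qed
qed

end



context symsetup
begin

lemma fst_J: "fst \<in> J \<rightarrow>\<^sub>M Sn" by (simp add: measurable_cong_sets[OF J_sets refl])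

lemma emp_transfer:
  fixes a :: "'w \<Rightarrow> 'z \<Rightarrow> real"
  assumes ih: "integrable Jh (\<lambda>(z, w). a w z)"
    and ihi: "\<And>i. i < n \<Longrightarrow> integrable J (\<lambda>(s, w). a w (s i))"
  shows "(\<integral>(z, w). a w z \<partial>Jh) = (\<integral>(s, w). emp_risk n a w s \<partial>J)"
proof -
  have n0: "real n > 0" using n by simp
  have hm: "(\<lambda>(z, w). a w z) \<in> borel_measurable (\<mu>' \<Otimes>\<^sub>M MW)"
    using borel_measurable_integrable[OF ih] by (simp add: measurable_cong_sets[OF Jh_sets refl])
  have ihi': "integrable J (\<lambda>p. (\<lambda>(z, w). a w z) (fst p i, snd p))" if "i < n" for i
    using ihi[OF that] by (simp add: case_prod_beta')
  have T: "real n * (\<integral>(z, w). a w z \<partial>Jh) = (\<Sum>i<n. \<integral>p. (\<lambda>(z, w). a w z) (fst p i, snd p) \<partial>J)"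
    by (rule transfer_int[OF hm ih ihi'])
  have "(\<integral>(s, w). emp_risk n a w s \<partial>J) = (\<integral>p. (\<Sum>i<n. a (snd p) (fst p i)) / real n \<partial>J)"
    unfolding emp_risk_def by (simp add: case_prod_beta')
  also have "\<dots> = (\<Sum>i<n. \<integral>p. a (snd p) (fst p i) \<partial>J) / real n"
    using ihi by (simp add: case_prod_beta' Bochner_Integration.integral_sum)
  also have "\<dots> = (\<integral>(z, w). a w z \<partial>Jh)" using T n0 by (simp add: case_prod_beta' field_simps)
  finally show ?thesis ..
qed

end



theorem theorem11:
  fixes MZ :: "'z measure" and MW :: "'w measure"
    and \<mu> \<mu>' :: "'z measure"
    and loss aux :: "'w \<Rightarrow> 'z \<Rightarrow> real"
    and n :: nat and r :: real
  assumes n_pos: "n \<ge> 1"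
    and r_nonneg: "r \<ge> 0"
    and mu: "prob_space \<mu>" "sets \<mu> = sets MZ"
    and mu': "prob_space \<mu>'" "sets \<mu>' = sets MZ"
    and loss_meas: "(\<lambda>(w, z). loss w z) \<in> borel_measurable (MW \<Otimes>\<^sub>M MZ)"
    and loss_nonneg: "\<And>w z. loss w z \<ge> 0"
    and aux_meas: "(\<lambda>(w, z). aux w z) \<in> borel_measurable (MW \<Otimes>\<^sub>M MZ)"
    \<comment> \<open>all expectations are well defined and finite:\<close>
    and L_fin: "\<And>w. w \<in> space MW \<Longrightarrow> integrable \<mu> (loss w)"
    and inf_bdd: "\<And>s. s \<in> space (PiM {..<n} (\<lambda>_. \<mu>')) \<Longrightarrow>
          bdd_below ((\<lambda>w. emp_risk n aux w s) ` space MW)"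
    and vn_fin: "integrable (PiM {..<n} (\<lambda>_. \<mu>'))
          (\<lambda>s. INF w \<in> space MW. emp_risk n aux w s)"
    and exp_fin_n: "\<And>K i. K \<in> PiM {..<n} (\<lambda>_. \<mu>') \<rightarrow>\<^sub>M prob_algebra MW \<Longrightarrow> i < n \<Longrightarrow>
          integrable (joint_law (PiM {..<n} (\<lambda>_. \<mu>')) K MW) (\<lambda>(s, w). loss w (s i)) \<and>
          integrable (joint_law (PiM {..<n} (\<lambda>_. \<mu>')) K MW) (\<lambda>(s, w). aux w (s i)) \<and>
          integrable (joint_law (PiM {..<n} (\<lambda>_. \<mu>')) K MW) (\<lambda>(s, w). pop_risk \<mu> loss w)"
    and exp_fin_1: "\<And>K. K \<in> \<mu>' \<rightarrow>\<^sub>M prob_algebra MW \<Longrightarrow>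
          integrable (joint_law \<mu>' K MW) (\<lambda>(z, w). loss w z) \<and>
          integrable (joint_law \<mu>' K MW) (\<lambda>(z, w). aux w z) \<and>
          integrable (joint_law \<mu>' K MW) (\<lambda>(z, w). pop_risk \<mu> loss w)"
  defines "Sn \<equiv> PiM {..<n} (\<lambda>_. \<mu>')"
    and "v_n \<equiv> (\<integral>s. (INF w \<in> space MW. emp_risk n aux w s) \<partial>(PiM {..<n} (\<lambda>_. \<mu>')))"
  shows
    "(SUP K \<in> {K \<in> Sn \<rightarrow>\<^sub>M prob_algebra MW. mutual_info Sn MW (joint_law Sn K MW) \<le> ennreal r}.
        ereal (\<integral>(s, w). pop_risk \<mu> loss w - emp_risk n loss w s \<partial>(joint_law Sn K MW)))
     \<le> (SUP K \<in> {K \<in> \<mu>' \<rightarrow>\<^sub>M prob_algebra MW.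
                    mutual_info \<mu>' MW (joint_law \<mu>' K MW) \<le> ennreal (r / real n) \<and>
                    (\<integral>(z, w). aux w z \<partial>(joint_law \<mu>' K MW)) \<ge> v_n}.
        ereal (\<integral>(z, w). pop_risk \<mu> loss w - loss w z \<partial>(joint_law \<mu>' K MW)))
   \<and> (SUP K \<in> {K \<in> \<mu>' \<rightarrow>\<^sub>M prob_algebra MW.
                    mutual_info \<mu>' MW (joint_law \<mu>' K MW) \<le> ennreal (r / real n) \<and>
                    (\<integral>(z, w). aux w z \<partial>(joint_law \<mu>' K MW)) \<ge> v_n}.
        ereal (\<integral>(z, w). pop_risk \<mu> loss w - loss w z \<partial>(joint_law \<mu>' K MW)))
     \<le> (SUP K \<in> {K \<in> \<mu>' \<rightarrow>\<^sub>M prob_algebra MW.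
                    mutual_info \<mu>' MW (joint_law \<mu>' K MW) \<le> ennreal (r / real n)}.
        ereal (\<integral>(z, w). pop_risk \<mu> loss w - loss w z \<partial>(joint_law \<mu>' K MW)))"
proof -
  have n0: "real n > 0" using n_pos by simp
  define Lset where "Lset = {K \<in> Sn \<rightarrow>\<^sub>M prob_algebra MW. mutual_info Sn MW (joint_law Sn K MW) \<le> ennreal r}"
  define Aset where "Aset = {K \<in> \<mu>' \<rightarrow>\<^sub>M prob_algebra MW.
                    mutual_info \<mu>' MW (joint_law \<mu>' K MW) \<le> ennreal (r / real n) \<and>
                    (\<integral>(z, w). aux w z \<partial>(joint_law \<mu>' K MW)) \<ge> v_n}"
  define Bset where "Bset = {K \<in> \<mu>' \<rightarrow>\<^sub>M prob_algebra MW.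
                    mutual_info \<mu>' MW (joint_law \<mu>' K MW) \<le> ennreal (r / real n)}"
  define val1 where "val1 K = ereal (\<integral>(z, w). pop_risk \<mu> loss w - loss w z \<partial>(joint_law \<mu>' K MW))" for K
  have second: "(SUP K \<in> Aset. val1 K) \<le> (SUP K \<in> Bset. val1 K)"
    by (rule SUP_subset_mono) (auto simp: Aset_def Bset_def)
  have first: "(SUP K \<in> Lset. ereal (\<integral>(s, w). pop_risk \<mu> loss w - emp_risk n loss w s \<partial>(joint_law Sn K MW)))
      \<le> (SUP K \<in> Aset. val1 K)"
  proof (rule SUP_least)
    fix K assume "K \<in> Lset"
    then have K: "K \<in> PiM {..<n} (\<lambda>_. \<mu>') \<rightarrow>\<^sub>M prob_algebra MW"
      and MI: "mutual_info (PiM {..<n} (\<lambda>_. \<mu>')) MW (joint_law (PiM {..<n} (\<lambda>_. \<mu>')) K MW) \<le> ennreal r"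
      unfolding Lset_def Sn_def by auto
    interpret S: symsetup \<mu>' MW n K by (rule symsetup.intro[OF mu'(1) n_pos K])
    note EN = exp_fin_n[OF K]
    note E1 = exp_fin_1[OF S.Khat_meas]
    have mi: "mutual_info \<mu>' MW S.Jh \<le> ennreal (r / real n)"
      by (rule S.MI_bound[OF r_nonneg MI])
    have auxeq: "(\<integral>(z, w). aux w z \<partial>S.Jh) = (\<integral>(s, w). emp_risk n aux w s \<partial>S.J)"
      by (rule S.emp_transfer) (use E1 EN in auto)
    define I where "I s = (INF w \<in> space MW. emp_risk n aux w s)" for s
    have Ii: "integrable S.Sn I" using vn_fin unfolding I_def .
    have Im: "I \<in> borel_measurable S.Sn" using borel_measurable_integrable[OF Ii] .
    have vJ: "v_n = (\<integral>p. I (fst p) \<partial>S.J)"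
    proof -
      have "v_n = (\<integral>s. I s \<partial>distr S.J S.Sn fst)"
        unfolding v_n_def I_def joint_law_fst[OF S.Sn_prob K] ..
      also have "\<dots> = (\<integral>p. I (fst p) \<partial>S.J)" by (rule integral_distr[OF S.fst_J Im])
      finally show ?thesis .
    qed
    have IJ: "integrable S.J (\<lambda>p. I (fst p))"
      using Ii joint_law_fst[OF S.Sn_prob K] integrable_distr_eq[OF S.fst_J Im] by simp
    have eJ: "integrable S.J (\<lambda>(s, w). emp_risk n aux w s)"
    proof -
      have "integrable S.J (\<lambda>p. (\<Sum>i<n. aux (snd p) (fst p i)) / real n)"
        using EN by (intro integrable_divide Bochner_Integration.integrable_sum) (auto simp: case_prod_beta')
      then show ?thesis unfolding emp_risk_def by (simp add: case_prod_beta')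
    qed
    have "v_n \<le> (\<integral>(s, w). emp_risk n aux w s \<partial>S.J)"
      unfolding vJ
    proof (rule integral_mono[OF IJ eJ])
      fix p assume p: "p \<in> space S.J"
      have sp: "space S.J = space S.Sn \<times> space MW"
        using sets_eq_imp_space_eq[OF S.J_sets] by (simp only: space_pair_measure)
      have p1: "fst p \<in> space S.Sn" and p2: "snd p \<in> space MW"
        using p unfolding sp by (simp_all add: mem_Times_iff)
      have "I (fst p) \<le> emp_risk n aux (snd p) (fst p)"
        unfolding I_def by (rule cINF_lower[OF inf_bdd[OF p1] p2])
      then show "I (fst p) \<le> (\<lambda>(s, w). emp_risk n aux w s) p"
        by (simp add: case_prod_beta')
    qed
    then have auxc: "v_n \<le> (\<integral>(z, w). aux w z \<partial>S.Jh)" using auxeq by simp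
    have KA: "S.Khat \<in> Aset" unfolding Aset_def using S.Khat_meas mi auxc by simp
    have valeq: "(\<integral>(s, w). pop_risk \<mu> loss w - emp_risk n loss w s \<partial>S.J) =
        (\<integral>(z, w). pop_risk \<mu> loss w - loss w z \<partial>S.Jh)"
    proof -
      have "(\<integral>(z, w). pop_risk \<mu> loss w - loss w z \<partial>S.Jh) =
          (\<integral>(s, w). emp_risk n (\<lambda>w z. pop_risk \<mu> loss w - loss w z) w s \<partial>S.J)"
      proof (rule S.emp_transfer)
        show "integrable S.Jh (\<lambda>(z, w). pop_risk \<mu> loss w - loss w z)"
          using E1 by (auto simp: case_prod_beta')
        fix i assume "i < n"
        then show "integrable S.J (\<lambda>(s, w). pop_risk \<mu> loss w - loss w (s i))"
          using EN by (auto simp: case_prod_beta')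
      qed
      also have "\<dots> = (\<integral>(s, w). pop_risk \<mu> loss w - emp_risk n loss w s \<partial>S.J)"
      proof (rule Bochner_Integration.integral_cong[OF refl])
        fix p
        show "(\<lambda>(s, w). emp_risk n (\<lambda>w z. pop_risk \<mu> loss w - loss w z) w s) p =
            (\<lambda>(s, w). pop_risk \<mu> loss w - emp_risk n loss w s) p"
          using n0 by (simp add: case_prod_beta' emp_risk_def sum_subtractf field_simps)
      qed
      finally show ?thesis ..
    qed
    show "ereal (\<integral>(s, w). pop_risk \<mu> loss w - emp_risk n loss w s \<partial>(joint_law Sn K MW)) \<le> (SUP K \<in> Aset. val1 K)"
      unfolding Sn_def valeq by (rule SUP_upper2[OF KA]) (simp add: val1_def)
  qed
  show ?thesis using first second unfolding Lset_def Aset_def Bset_def val1_def by simp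
qed

end
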